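(* Let $(\alpha,\beta)\in\Delta_K$, $(\alpha_n,\beta_n)=T^n(\alpha,\beta)$, $\varepsilon_n=\varepsilon(\alpha_n,\beta_n)$, and $n\ge0$. Then the dual substitution $\Theta_{\varepsilon_n}$ satisfies: (1) if $(\bar{\bar x},i^* )\in\mathscr S(\bar{\bar\nu}(\alpha_{n+1},\beta_{n+1}))$, then every unit square occurring in $\Theta_{\varepsilon_n}(\bar{\bar x},i^* )$ belongs to $\mathscr S(\bar{\bar\nu}(\alpha_n,\beta_n))$, so $\Theta_{\varepsilon_n}(\bar{\bar x},i^* )\in\mathcal G(\bar{\bar\nu}(\alpha_n,\beta_n))$; (2) two distinct unit squares of $\mathscr S(\bar{\bar\nu}(\alpha_{n+1},\beta_{n+1}))$ are sent to images having no unit square in common (i.e. disjoint except for their boundaries); (3) for every $(\bar{\bar z},k^* )\in\mathscr S(\bar{\bar\nu}(\alpha_n,\beta_n))$ there exists $(\bar{\bar x},i^* )\in\mathscr S(\bar{\bar\nu}(\alpha_{n+1},\beta_{n+1}))$ such that $\Theta_{\varepsilon_n}(\bar{\bar x},i^* )\succ(\bar{\bar z},k^* )$, i.e. $(\bar{\bar z},k^* )$ is one of the unit squares of $\Theta_{\varepsilon_n}(\bar{\bar x},i^* )$.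
   Context: Let $K\subset\mathbb{R}$ be a real cubic number field, $N=N_{K/\mathbb{Q}}$ its norm. Fix $r=p/q$ with $p,q$ positive coprime integers and $3\nmid p$. Let $\Delta_K=\{(\alpha,\beta)\in K^2:\ 1,\alpha,\beta \text{ linearly independent over }\mathbb{Q},\ \alpha,\beta>0,\ \alpha+\beta<1\}$ and $Ind=\{(i,j): i,j\in\{0,1,2\},\ i\neq j\}$. Let $\Delta=\{(x,y)\in\mathbb{R}^2: x,y\ge 0,\ x+y\le 1\}$ and $\triangle(1,2)=\{(x,y)\in\Delta: x\ge y\}$, $\triangle(2,1)=\{x\le y\}$, $\triangle(0,1)=\{2x+y-1\le 0\}$, $\triangle(1,0)=\{2x+y-1\ge 0\}$, $\triangle(0,2)=\{x+2y-1\le0\}$, $\triangle(2,0)=\{x+2y-1\ge 0\}$ (all subsets of $\Delta$). Maps $T_{(i,j)}:\triangle(i,j)\to\Delta$: $T_{(1,2)}(x,y)=(\frac{x-y}{1-y},\frac{y}{1-y})$, $T_{(2,1)}(x,y)=(\frac{x}{1-x},\frac{y-x}{1-x})$, $T_{(0,1)}(x,y)=(\frac{x}{1-x},\frac{y}{1-x})$, $T_{(1,0)}(x,y)=(\frac{2x+y-1}{x+y},\frac{y}{x+y})$, $T_{(0,2)}(x,y)=(\frac{x}{1-y},\frac{y}{1-y})$, $T_{(2,0)}(x,y)=(\frac{x}{x+y},\frac{x+2y-1}{x+y})$. For $(\alpha,\beta)\in\Delta_K$ put $\gamma=1-\alpha-\beta$ and $v_{\{1,2\}}=\frac{\alpha^r\beta^r}{|N(\alpha)N(\beta)|}$,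 $v_{\{0,1\}}=\frac{\alpha^r\gamma^r}{|N(\alpha)N(\gamma)|}$, $v_{\{0,2\}}=\frac{\beta^r\gamma^r}{|N(\beta)N(\gamma)|}$; the maximum is attained at a unique pair $\{i_0,j_0\}$. $\varepsilon(\alpha,\beta)$ is the ordered pair $(i,j)\in Ind$ with $\{i,j\}=\{i_0,j_0\}$ and $(\alpha,\beta)\in\triangle(i,j)$, and $T(\alpha,\beta)=T_{\varepsilon(\alpha,\beta)}(\alpha,\beta)$ (a map $\Delta_K\to\Delta_K$). For $(i,j)\in Ind$, $M_{(i,j)}=(m_{k\ell})_{0\le k,\ell\le2}$ with $m_{k\ell}=1$ if $k=\ell$ or $(k,\ell)=(i,j)$, and $0$ otherwise; $L_{(i,j)}:=M_{(j,i)}$. For $(\alpha,\beta)\in\Delta_K$, $\bar{\bar\nu}(\alpha,\beta)={}^t(1-\alpha-\beta,\alpha,\beta)$. Let $\bar{\bar e}_0,\bar{\bar e}_1,\bar{\bar e}_2$ be the standard basis of $\mathbb{R}^3$. A unit square $(\bar{\bar x},i^* )$ ($\bar{\bar x}\in\mathbb{Z}^3$, $i\in\{0,1,2\}$) is the set $\{\bar{\bar x}+t\bar{\bar e}_j+u\bar{\bar e}_k: t,u\in[0,1]\}$ with $\{i,j,k\}=\{0,1,2\}$. For $\bar{\bar a}\in\mathbb{R}^3_{>0}$ with $\mathbb{Q}$-linearly independent coordinates, the stepped surface is $\mathscr S(\bar{\bar a})=\{(\bar{\bar x},i^* ): \bar{\bar x}\in\mathbb{Z}^3, i\in\{0,1,2\},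 \langle\bar{\bar x},\bar{\bar a}\rangle>0,\ \langle\bar{\bar x}-\bar{\bar e}_i,\bar{\bar a}\rangle\le0\}$, and $\mathcal G(\bar{\bar a})$ is the free $\mathbb{Z}$-module of finite formal sums of elements of $\mathscr S(\bar{\bar a})$. A sum with all coefficients $1$ (a patch) is identified with its finite set of squares; for patches $\gamma,\delta$, $\gamma\prec\delta$ (equivalently $\delta\succ\gamma$) means the set of squares of $\gamma$ is contained in that of $\delta$. For $(i,j)\in Ind$ the dual substitution $\Theta_{(i,j)}$ is defined on unit squares by $\Theta_{(i,j)}(\bar{\bar x},j^* )=(L_{(i,j)}^{-1}(\bar{\bar x}+\bar{\bar e}_i),i^* )+(L_{(i,j)}^{-1}\bar{\bar x},j^* )$ and $\Theta_{(i,j)}(\bar{\bar x},k^* )=(L_{(i,j)}^{-1}\bar{\bar x},k^* )$ for $k\neq j$, and extended additively to formal sums. *)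

theory Defs
  imports Complex_Main "HOL-Library.Multiset"
begin

definition is_subfield_real :: "real set \<Rightarrow> bool" where
  "is_subfield_real K \<longleftrightarrow> 0 \<in> K \<and> 1 \<in> K \<and>
     (\<forall>x\<in>K. \<forall>y\<in>K. x + y \<in> K \<and> x - y \<in> K \<and> x * y \<in> K) \<and>
     (\<forall>x\<in>K. x \<noteq> 0 \<longrightarrow> inverse x \<in> K)"

definition is_real_cubic_field :: "real set \<Rightarrow> bool" where
  "is_real_cubic_field K \<longleftrightarrow> is_subfield_real K \<and>
     (\<exists>b0 b1 b2. b0 \<in> K \<and> b1 \<in> K \<and> b2 \<in> K \<and>
        (\<forall>x\<in>K. \<exists>!q :: rat \<times> rat \<times> rat.
            x = of_rat (fst q) * b0 + of_rat (fst (snd q)) * b1 + of_rat (snd (snd q)) * b2))"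

text \<open>Field embeddings of K into the complex numbers (extended by 0 outside K,
  so that each embedding is a unique function).\<close>
definition embeddings :: "real set \<Rightarrow> (real \<Rightarrow> complex) set" where
  "embeddings K = {\<sigma>. \<sigma> 1 = 1 \<and>
       (\<forall>x\<in>K. \<forall>y\<in>K. \<sigma> (x + y) = \<sigma> x + \<sigma> y \<and> \<sigma> (x * y) = \<sigma> x * \<sigma> y) \<and>
       (\<forall>x. x \<notin> K \<longrightarrow> \<sigma> x = 0)}"

definition normK :: "real set \<Rightarrow> real \<Rightarrow> complex" where
  "normK K x = (\<Prod>\<sigma>\<in>embeddings K. \<sigma> x)"

definition DeltaK :: "real set \<Rightarrow> (real \<times> real) set" where
  "DeltaK K = {(a, b). a \<in> K \<and> b \<in> K \<and>
      (\<forall>c0 c1 c2 :: rat. of_rat c0 + of_rat c1 * a + of_rat c2 * b = 0 \<longrightarrow>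
          c0 = 0 \<and> c1 = 0 \<and> c2 = 0) \<and>
      a > 0 \<and> b > 0 \<and> a + b < 1}"

definition Ind :: "(nat \<times> nat) set" where
  "Ind = {(i, j). i \<in> {0,1,2} \<and> j \<in> {0,1,2} \<and> i \<noteq> j}"

definition Delta :: "(real \<times> real) set" where
  "Delta = {(x, y). x \<ge> 0 \<and> y \<ge> 0 \<and> x + y \<le> 1}"

definition tri :: "nat \<times> nat \<Rightarrow> (real \<times> real) set" where
  "tri ij = {(x, y). (x, y) \<in> Delta \<and>
     (if ij = (1,2) then x \<ge> y
      else if ij = (2,1) then x \<le> y
      else if ij = (0,1) then 2*x + y - 1 \<le> 0
      else if ij = (1,0) then 2*x + y - 1 \<ge> 0
      else if ij = (0,2) then x + 2*y - 1 \<le> 0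
      else if ij = (2,0) then x + 2*y - 1 \<ge> 0
      else False)}"

definition Tij :: "nat \<times> nat \<Rightarrow> real \<times> real \<Rightarrow> real \<times> real" where
  "Tij ij p = (case p of (x, y) \<Rightarrow>
     (if ij = (1,2) then ((x - y) / (1 - y), y / (1 - y))
      else if ij = (2,1) then (x / (1 - x), (y - x) / (1 - x))
      else if ij = (0,1) then (x / (1 - x), y / (1 - x))
      else if ij = (1,0) then ((2*x + y - 1) / (x + y), y / (x + y))
      else if ij = (0,2) then (x / (1 - y), y / (1 - y))
      else ((x / (x + y), (x + 2*y - 1) / (x + y)))))"

definition vw :: "real set \<Rightarrow> real \<Rightarrow> real \<Rightarrow> real \<Rightarrow> real" where
  "vw K r s t = s powr r * t powr r / (cmod (normK K s) * cmod (normK K t))"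

text \<open>Ties (which do not occur on Delta_K) are resolved by an arbitrary convention.\<close>
definition eps :: "real set \<Rightarrow> real \<Rightarrow> real \<times> real \<Rightarrow> nat \<times> nat" where
  "eps K r p = (case p of (a, b) \<Rightarrow>
     (let g = 1 - a - b; v12 = vw K r a b; v01 = vw K r a g; v02 = vw K r b g in
      if v12 > v01 \<and> v12 > v02 then (if (a, b) \<in> tri (1,2) then (1,2) else (2,1))
      else if v01 > v12 \<and> v01 > v02 then (if (a, b) \<in> tri (0,1) then (0,1) else (1,0))
      else (if (a, b) \<in> tri (0,2) then (0,2) else (2,0))))"

definition Tmap :: "real set \<Rightarrow> real \<Rightarrow> real \<times> real \<Rightarrow> real \<times> real" where
  "Tmap K r p = Tij (eps K r p) p"

type_synonym ivec = "int \<times> int \<times> int"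
type_synonym rvec = "real \<times> real \<times> real"

definition comp :: "'a \<times> 'a \<times> 'a \<Rightarrow> nat \<Rightarrow> 'a" where
  "comp v k = (case v of (a, b, c) \<Rightarrow> if k = 0 then a else if k = 1 then b else c)"

definition mkv :: "(nat \<Rightarrow> 'a) \<Rightarrow> 'a \<times> 'a \<times> 'a" where
  "mkv f = (f 0, f 1, f 2)"

definition vadd :: "ivec \<Rightarrow> ivec \<Rightarrow> ivec" where
  "vadd x y = mkv (\<lambda>k. comp x k + comp y k)"

definition vsub :: "ivec \<Rightarrow> ivec \<Rightarrow> ivec" where
  "vsub x y = mkv (\<lambda>k. comp x k - comp y k)"

definition ee :: "nat \<Rightarrow> ivec" where
  "ee i = mkv (\<lambda>k. if k = i then 1 else 0)"

definition inner3 :: "ivec \<Rightarrow> rvec \<Rightarrow> real" where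
  "inner3 x a = (\<Sum>k<3. of_int (comp x k) * comp a k)"

definition nu :: "real \<times> real \<Rightarrow> rvec" where
  "nu p = (case p of (a, b) \<Rightarrow> (1 - a - b, a, b))"

definition Mmat :: "nat \<times> nat \<Rightarrow> nat \<Rightarrow> nat \<Rightarrow> int" where
  "Mmat ij k l = (if k = l \<or> (k, l) = ij then 1 else 0)"

definition Lmat :: "nat \<times> nat \<Rightarrow> nat \<Rightarrow> nat \<Rightarrow> int" where
  "Lmat ij = Mmat (snd ij, fst ij)"

definition matvec :: "(nat \<Rightarrow> nat \<Rightarrow> int) \<Rightarrow> ivec \<Rightarrow> ivec" where
  "matvec m x = mkv (\<lambda>k. \<Sum>l<3. m k l * comp x l)"

definition Linv :: "nat \<times> nat \<Rightarrow> ivec \<Rightarrow> ivec" where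
  "Linv ij y = (THE x. matvec (Lmat ij) x = y)"

text \<open>A unit square (x, i^*) is represented as the pair (x, i) with i < 3.\<close>
type_synonym square = "ivec \<times> nat"

definition stepped :: "rvec \<Rightarrow> square set" where
  "stepped a = {(x, i). i < 3 \<and> inner3 x a > 0 \<and> inner3 (vsub x (ee i)) a \<le> 0}"

text \<open>Dual substitution Theta_{(i,j)} on unit squares; its value is a formal sum
  with coefficients in N, represented as a multiset of unit squares.\<close>
definition Theta :: "nat \<times> nat \<Rightarrow> square \<Rightarrow> square multiset" where
  "Theta ij s = (case ij of (i, j) \<Rightarrow> case s of (x, k) \<Rightarrow>
     (if k = j then {# (Linv (i,j) (vadd x (ee i)), i), (Linv (i,j) x, j) #}
      else {# (Linv (i,j) x, k) #}))"

end

theory Submission imports Defs begin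

lemma sum3: "(\<Sum>k<(3::nat). f k) = f 0 + f 1 + (f 2 :: 'a::comm_monoid_add)"
  by (simp add: numeral_3_eq_3 numeral_2_eq_2 lessThan_Suc add.commute add.left_commute)

lemma comp_simps[simp]: "comp (a,b,c) 0 = a" "comp (a,b,c) (Suc 0) = b" "comp (a,b,c) 1 = b" "comp (a,b,c) 2 = c"
  by (auto simp: comp_def)

lemma mkv_simp[simp]: "mkv f = (f 0, f 1, f 2)" by (simp add: mkv_def)

lemma inner3_eq: "inner3 x a = of_int (comp x 0) * comp a 0 + of_int (comp x 1) * comp a 1 + of_int (comp x 2) * comp a 2"
  by (simp add: inner3_def sum3)

lemma inner3_tup: "inner3 (x0,x1,x2) (a0,a1,a2) = of_int x0 * a0 + of_int x1 * a1 + of_int x2 * a2"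
  by (simp add: inner3_eq)

lemma inner3_add: "inner3 (vadd x y) a = inner3 x a + inner3 y a"
  by (cases x; cases y) (simp add: inner3_eq vadd_def algebra_simps)
lemma inner3_sub: "inner3 (vsub x y) a = inner3 x a - inner3 y a"
  by (cases x; cases y) (simp add: inner3_eq vsub_def algebra_simps)
lemma inner3_ee: "k < 3 \<Longrightarrow> inner3 (ee k) a = comp a k"
  by (cases a) (auto simp: inner3_eq ee_def less_Suc_eq numeral_3_eq_3)

lemma vadd_sub: "vadd (vsub w e) e = w" "vsub (vadd w e) e = w"
  by (cases w; cases e; simp add: vadd_def vsub_def)+

definition Lf :: "nat \<times> nat \<Rightarrow> ivec \<Rightarrow> ivec" where
  "Lf ij y = mkv (\<lambda>k. comp y k - (if k = snd ij then comp y (fst ij) else 0))"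

lemma Ind_cases: "(i,j) \<in> Ind \<Longrightarrow> (i,j) \<in> {(0,1),(0,2),(1,0),(1,2),(2,0),(2,1)}"
  by (auto simp: Ind_def)

lemma Ind_disj: "(i,j) \<in> Ind \<Longrightarrow> (i = 0 \<and> j = 1) \<or> (i = 0 \<and> j = 2) \<or> (i = 1 \<and> j = 0) \<or> (i = 1 \<and> j = 2) \<or> (i = 2 \<and> j = 0) \<or> (i = 2 \<and> j = 1)"
  by (auto simp: Ind_def)

lemma matvec_L: "(i,j) \<in> Ind \<Longrightarrow> matvec (Lmat (i,j)) (x0,x1,x2) = mkv (\<lambda>k. comp (x0,x1,x2) k + (if k = j then comp (x0,x1,x2) i else 0))"
  apply (drule Ind_disj)
  apply (elim disjE conjE; simp add: matvec_def Lmat_def Mmat_def sum3)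
  done

lemma Lf_inj: "(i,j) \<in> Ind \<Longrightarrow> Lf (i,j) y = Lf (i,j) y' \<Longrightarrow> y = y'"
  by (cases y; cases y'; drule Ind_disj; elim disjE conjE; simp add: Lf_def)

lemma Lf_surj: "(i,j) \<in> Ind \<Longrightarrow> Lf (i,j) (matvec (Lmat (i,j)) z) = z"
  by (cases z; frule Ind_disj; elim disjE conjE; simp add: Lf_def matvec_L)

lemma Linv_eq: "(i,j) \<in> Ind \<Longrightarrow> Linv (i,j) y = Lf (i,j) y"
  unfolding Linv_def
  apply (rule the_equality)
   apply (cases y) apply (frule Ind_disj) apply (elim disjE conjE; simp add: matvec_L Lf_def)
  apply (metis Lf_surj)
  done

lemma Lf_inner:
  assumes ij: "(i,j) \<in> Ind" and h: "\<forall>k<3. comp a k = c * (comp b k + (if k = i then comp b j else 0))"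
  shows "inner3 (Lf (i,j) y) a = c * inner3 y b"
proof -
  have h0: "comp a 0 = c * (comp b 0 + (if 0 = i then comp b j else 0))" using h by simp
  have h1: "comp a 1 = c * (comp b 1 + (if 1 = i then comp b j else 0))" using h by simp
  have h2: "comp a 2 = c * (comp b 2 + (if 2 = i then comp b j else 0))" using h by simp
  obtain a0 a1 a2 where a: "a = (a0,a1,a2)" by (cases a)
  obtain b0 b1 b2 where b: "b = (b0,b1,b2)" by (cases b)
  obtain y0 y1 y2 where y: "y = (y0,y1,y2)" by (cases y)
  from Ind_disj[OF ij] show ?thesis using h0 h1 h2
    by (elim disjE conjE) (simp_all add: a b y Lf_def inner3_tup algebra_simps)
qed

lemma Theta_mem: "z \<in># Theta (i,j) (x,k) \<longleftrightarrow> z = (Linv (i,j) x, k) \<or> (k = j \<and> z = (Linv (i,j) (vadd x (ee i)), i))"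
  by (auto simp: Theta_def)

lemma inner3_sub_ee: "k < 3 \<Longrightarrow> inner3 (vsub x (ee k)) v = inner3 x v - comp v k"
  by (simp add: inner3_sub inner3_ee)
lemma inner3_add_ee: "k < 3 \<Longrightarrow> inner3 (vadd x (ee k)) v = inner3 x v + comp v k"
  by (simp add: inner3_add inner3_ee)

lemma core:
  assumes ij: "(i,j) \<in> Ind" and c: "c > 0" and bi: "comp b i \<ge> 0" and bj: "comp b j \<ge> 0"
    and h: "\<forall>k<3. comp a k = c * (comp b k + (if k = i then comp b j else 0))"
  shows "(\<forall>s\<in>stepped b. set_mset (Theta (i,j) s) \<subseteq> stepped a)
       \<and> (\<forall>s\<in>stepped b. \<forall>t\<in>stepped b. s \<noteq> t \<longrightarrow> set_mset (Theta (i,j) s) \<inter> set_mset (Theta (i,j) t) = {})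
       \<and> (\<forall>z\<in>stepped a. \<exists>s\<in>stepped b. z \<in># Theta (i,j) s)"
proof -
  have i3: "i < 3" and j3: "j < 3" and ij': "i \<noteq> j" using ij by (auto simp: Ind_def)
  have inn: "inner3 (Linv (i,j) y) a = c * inner3 y b" for y
    using Linv_eq[OF ij] Lf_inner[OF ij h] by simp
  have inj: "Linv (i,j) y = Linv (i,j) y' \<Longrightarrow> y = y'" for y y'
    using Linv_eq[OF ij] Lf_inj[OF ij] by metis
  have surj: "Linv (i,j) (matvec (Lmat (i,j)) z) = z" for z
    using Linv_eq[OF ij] Lf_surj[OF ij] by metis
  have stepA: "(Linv (i,j) y, k) \<in> stepped a \<longleftrightarrow> k < 3 \<and> inner3 y b > 0 \<and>
      inner3 y b - comp b k - (if k = i then comp b j else 0) \<le> 0" for y k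
  proof (cases "k < 3")
    case True
    have "inner3 (vsub (Linv (i,j) y) (ee k)) a = inner3 (Linv (i,j) y) a - comp a k"
      by (rule inner3_sub_ee[OF True])
    also have "\<dots> = c * inner3 y b - c * (comp b k + (if k = i then comp b j else 0))"
      using inn h True by simp
    also have "\<dots> = c * (inner3 y b - comp b k - (if k = i then comp b j else 0))"
      by (simp add: algebra_simps)
    finally have "inner3 (vsub (Linv (i,j) y) (ee k)) a = c * (inner3 y b - comp b k - (if k = i then comp b j else 0))" .
    then show ?thesis using True c
      by (simp add: stepped_def inn zero_less_mult_iff mult_le_0_iff)
  qed (simp add: stepped_def)
  have stepB: "(x, k) \<in> stepped b \<longleftrightarrow> k < 3 \<and> inner3 x b > 0 \<and> inner3 x b - comp b k \<le> 0" for x k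
    by (auto simp: stepped_def inner3_sub_ee)
  have P1: "\<forall>s\<in>stepped b. set_mset (Theta (i,j) s) \<subseteq> stepped a"
  proof (intro ballI subsetI)
    fix s z assume s: "s \<in> stepped b" and z: "z \<in># Theta (i,j) s"
    obtain x k where sx: "s = (x,k)" by (cases s)
    have k: "k < 3" "inner3 x b > 0" "inner3 x b - comp b k \<le> 0" using s sx stepB by auto
    from z sx have "z = (Linv (i,j) x, k) \<or> (k = j \<and> z = (Linv (i,j) (vadd x (ee i)), i))"
      by (simp add: Theta_mem)
    then show "z \<in> stepped a"
    proof
      assume "z = (Linv (i,j) x, k)"
      then show ?thesis using k bj by (auto simp: stepA)
    next
      assume "k = j \<and> z = (Linv (i,j) (vadd x (ee i)), i)"
      then show ?thesis using k bi i3 by (auto simp: stepA inner3_add_ee)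
    qed
  qed
  have P2: "\<forall>s\<in>stepped b. \<forall>t\<in>stepped b. s \<noteq> t \<longrightarrow> set_mset (Theta (i,j) s) \<inter> set_mset (Theta (i,j) t) = {}"
  proof (intro ballI impI equalityI subsetI)
    fix s t z assume s: "s \<in> stepped b" and t: "t \<in> stepped b" and st: "s \<noteq> t"
      and z: "z \<in> set_mset (Theta (i,j) s) \<inter> set_mset (Theta (i,j) t)"
    obtain x k where sx: "s = (x,k)" by (cases s)
    obtain x' k' where tx: "t = (x',k')" by (cases t)
    have k: "k < 3" "inner3 x b > 0" "inner3 x b - comp b k \<le> 0" using s sx stepB by auto
    have k': "k' < 3" "inner3 x' b > 0" "inner3 x' b - comp b k' \<le> 0" using t tx stepB by auto
    have z1: "z = (Linv (i,j) x, k) \<or> (k = j \<and> z = (Linv (i,j) (vadd x (ee i)), i))"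
      using z sx by (simp add: Theta_mem)
    have z2: "z = (Linv (i,j) x', k') \<or> (k' = j \<and> z = (Linv (i,j) (vadd x' (ee i)), i))"
      using z tx by (simp add: Theta_mem)
    show "z \<in> {}"
    proof -
      have False
      proof (cases "z = (Linv (i,j) x, k)")
        case A: True
        show False
        proof (cases "z = (Linv (i,j) x', k')")
          case True
          then have e: "Linv (i,j) x = Linv (i,j) x'" "k = k'" using A by auto
          then show False using inj[OF e(1)] st sx tx by auto
        next
          case False
          then have "k' = j" "z = (Linv (i,j) (vadd x' (ee i)), i)" using z2 by auto
          then have e: "Linv (i,j) x = Linv (i,j) (vadd x' (ee i))" "k = i" using A by auto
          then have "x = vadd x' (ee i)" "k = i" using inj[OF e(1)] by auto
          then show False using k k' i3 by (simp add: inner3_add_ee)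
        qed
      next
        case B: False
        then have B1: "k = j" "z = (Linv (i,j) (vadd x (ee i)), i)" using z1 by auto
        show False
        proof (cases "z = (Linv (i,j) x', k')")
          case True
          then have e: "Linv (i,j) x' = Linv (i,j) (vadd x (ee i))" "k' = i" using B1 by auto
          then have "x' = vadd x (ee i)" "k' = i" using inj[OF e(1)] by auto
          then show False using k k' i3 by (simp add: inner3_add_ee)
        next
          case False
          then have "k' = j" "z = (Linv (i,j) (vadd x' (ee i)), i)" using z2 by auto
          then have e: "Linv (i,j) (vadd x (ee i)) = Linv (i,j) (vadd x' (ee i))" using B1 by auto
          then have "vadd x (ee i) = vadd x' (ee i)" using inj[OF e] by auto
          then have "x = x'" by (metis vadd_sub(2))
          then show False using st sx tx B1 \<open>k' = j\<close> by auto
        qed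
      qed
      then show ?thesis by simp
    qed
  qed simp
  have P3: "\<forall>z\<in>stepped a. \<exists>s\<in>stepped b. z \<in># Theta (i,j) s"
  proof
    fix zz assume zz: "zz \<in> stepped a"
    obtain z k where zk: "zz = (z,k)" by (cases zz)
    define w where "w = matvec (Lmat (i,j)) z"
    have zw: "Linv (i,j) w = z" using surj w_def by simp
    have A: "k < 3" "inner3 w b > 0" "inner3 w b - comp b k - (if k = i then comp b j else 0) \<le> 0"
      using zz zk zw stepA[of w k] by auto
    show "\<exists>s\<in>stepped b. zz \<in># Theta (i,j) s"
    proof (cases "k = i")
      case False
      then have "(w,k) \<in> stepped b" using A stepB by auto
      moreover have "zz \<in># Theta (i,j) (w,k)" using zk zw by (simp add: Theta_mem)
      ultimately show ?thesis by blast
    next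
      case True
      show ?thesis
      proof (cases "inner3 w b - comp b i \<le> 0")
        case True
        then have "(w,i) \<in> stepped b" using A stepB i3 by auto
        moreover have "zz \<in># Theta (i,j) (w,i)" using zk zw \<open>k = i\<close> by (simp add: Theta_mem)
        ultimately show ?thesis by blast
      next
        case False
        then have "(vsub w (ee i), j) \<in> stepped b" using A stepB i3 j3 \<open>k = i\<close>
          by (simp add: inner3_sub_ee)
        moreover have "zz \<in># Theta (i,j) (vsub w (ee i), j)" using zk zw \<open>k = i\<close>
          by (simp add: Theta_mem vadd_sub)
        ultimately show ?thesis by blast
      qed
    qed
  qed
  show ?thesis using P1 P2 P3 by blast
qed

definition indep :: "real \<Rightarrow> real \<Rightarrow> bool" where
  "indep x y \<longleftrightarrow> (\<forall>c0 c1 c2 :: rat. of_rat c0 + of_rat c1 * x + of_rat c2 * y = 0 \<longrightarrow> c0 = 0 \<and> c1 = 0 \<and> c2 = 0)"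

definition Inv :: "real \<times> real \<Rightarrow> bool" where
  "Inv p = (case p of (x,y) \<Rightarrow> x > 0 \<and> y > 0 \<and> x + y < 1 \<and> indep x y)"

lemma indep_trans:
  assumes "indep x y" and "d \<noteq> 0"
    and eq: "\<And>c0 c1 c2. (of_rat c0 + of_rat c1 * x' + of_rat c2 * y') * d = of_rat (fa c0 c1 c2) + of_rat (fb c0 c1 c2) * x + of_rat (fc c0 c1 c2) * y"
    and imp: "\<And>c0 c1 c2. fa c0 c1 c2 = 0 \<Longrightarrow> fb c0 c1 c2 = 0 \<Longrightarrow> fc c0 c1 c2 = 0 \<Longrightarrow> c0 = 0 \<and> c1 = 0 \<and> c2 = 0"
  shows "indep x' y'"
  unfolding indep_def
proof (intro allI impI)
  fix c0 c1 c2 :: rat assume h: "of_rat c0 + of_rat c1 * x' + of_rat c2 * y' = 0"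
  have "of_rat (fa c0 c1 c2) + of_rat (fb c0 c1 c2) * x + of_rat (fc c0 c1 c2) * y = 0"
    using eq[of c0 c1 c2] h by simp
  then show "c0 = 0 \<and> c1 = 0 \<and> c2 = 0" using assms(1) imp unfolding indep_def by blast
qed

lemma nu_pos: "Inv p \<Longrightarrow> k < 3 \<Longrightarrow> comp (nu p) k > 0"
  by (cases p) (auto simp: Inv_def nu_def comp_def)

lemma divlem: "(d::real) \<noteq> 0 \<Longrightarrow> (A + B * (P / d) + C * (Q / d)) * d = A * d + B * P + C * Q"
  by (simp add: algebra_simps)

lemma nu_div: "(d::real) \<noteq> 0 \<Longrightarrow> nu (P / d, Q / d) = ((d - P - Q) / d, P / d, Q / d)"
  by (simp add: nu_def field_simps)

lemma dm: "(d::real) \<noteq> 0 \<Longrightarrow> d * (A / d) = A"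
  by simp

lemma nu_xy: "nu (x, y) = (1 - x - y, x, y)"
  by (simp add: nu_def)

lemma case0:
  assumes "Inv (x,y)" and cnd: "x \<ge> y"
  shows "Inv (Tij (1,2) (x,y)) \<and> (\<exists>c>0. \<forall>k<3. comp (nu (x,y)) k = c * (comp (nu (Tij (1,2) (x,y))) k + (if k = 1 then comp (nu (Tij (1,2) (x,y))) 2 else 0)))"
proof -
  have I: "x > 0" "y > 0" "x + y < 1" "indep x y" using assms(1) by (auto simp: Inv_def)
  have ne: "x \<noteq> y"
  proof
    assume h: "x = y"
    have "of_rat (0) + of_rat (1) * x + of_rat (-1) * y = (0::real)" using h by (simp add: algebra_simps)
    then show False using I(4)[unfolded indep_def, rule_format, of "0" "1" "-1"] by simp
  qed
  have T: "Tij (1,2) (x,y) = ((x - y) / (1 - y), y / (1 - y))" by (simp add: Tij_def)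
  have d: "1 - y > 0" using I by linarith
  have dne: "1 - y \<noteq> 0" using d by linarith
  have ind: "indep ((x - y) / (1 - y)) (y / (1 - y))"
    apply (rule indep_trans[OF I(4), where d="1 - y" and fa="\<lambda>c0 c1 c2. c0" and fb="\<lambda>c0 c1 c2. c1" and fc="\<lambda>c0 c1 c2. c2 - c0 - c1"])
    using d apply simp
    using d apply (subst divlem, simp)
     apply (simp add: of_rat_add of_rat_diff of_rat_mult of_rat_minus algebra_simps)
    apply (intro conjI; linarith)
    done
  have PQ: "(x - y) > 0" "y > 0" "(x - y) + y < 1 - y" using I d cnd ne by linarith+
  have pos: "(x - y) / (1 - y) > 0" "y / (1 - y) > 0" "(x - y) / (1 - y) + y / (1 - y) < 1"
    using PQ d by (simp_all add: add_divide_distrib[symmetric] pos_divide_less_eq)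
  have "Inv (Tij (1,2) (x,y))" using pos ind T by (simp add: Inv_def)
  moreover have "\<forall>k<3. comp (nu (x,y)) k = (1 - y) * (comp (nu (Tij (1,2) (x,y))) k + (if k = 1 then comp (nu (Tij (1,2) (x,y))) 2 else 0))"
  proof (intro allI impI)
    fix k :: nat assume "k < 3"
    then have "k = 0 \<or> k = 1 \<or> k = 2" by auto
    then show "comp (nu (x,y)) k = (1 - y) * (comp (nu (Tij (1,2) (x,y))) k + (if k = 1 then comp (nu (Tij (1,2) (x,y))) 2 else 0))"
      using dne unfolding T by (elim disjE; simp only: nu_div[OF dne]; simp add: distrib_left dm[OF dne] nu_xy; linarith?)
  qed
  ultimately show ?thesis using d by blast
qed

lemma case1:
  assumes "Inv (x,y)" and cnd: "\<not> x \<ge> y"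
  shows "Inv (Tij (2,1) (x,y)) \<and> (\<exists>c>0. \<forall>k<3. comp (nu (x,y)) k = c * (comp (nu (Tij (2,1) (x,y))) k + (if k = 2 then comp (nu (Tij (2,1) (x,y))) 1 else 0)))"
proof -
  have I: "x > 0" "y > 0" "x + y < 1" "indep x y" using assms(1) by (auto simp: Inv_def)
  have T: "Tij (2,1) (x,y) = (x / (1 - x), (y - x) / (1 - x))" by (simp add: Tij_def)
  have d: "1 - x > 0" using I by linarith
  have dne: "1 - x \<noteq> 0" using d by linarith
  have ind: "indep (x / (1 - x)) ((y - x) / (1 - x))"
    apply (rule indep_trans[OF I(4), where d="1 - x" and fa="\<lambda>c0 c1 c2. c0" and fb="\<lambda>c0 c1 c2. c1 - c0 - c2" and fc="\<lambda>c0 c1 c2. c2"])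
    using d apply simp
    using d apply (subst divlem, simp)
     apply (simp add: of_rat_add of_rat_diff of_rat_mult of_rat_minus algebra_simps)
    apply (intro conjI; linarith)
    done
  have PQ: "x > 0" "(y - x) > 0" "x + (y - x) < 1 - x" using I d cnd  by linarith+
  have pos: "x / (1 - x) > 0" "(y - x) / (1 - x) > 0" "x / (1 - x) + (y - x) / (1 - x) < 1"
    using PQ d by (simp_all add: add_divide_distrib[symmetric] pos_divide_less_eq)
  have "Inv (Tij (2,1) (x,y))" using pos ind T by (simp add: Inv_def)
  moreover have "\<forall>k<3. comp (nu (x,y)) k = (1 - x) * (comp (nu (Tij (2,1) (x,y))) k + (if k = 2 then comp (nu (Tij (2,1) (x,y))) 1 else 0))"
  proof (intro allI impI)
    fix k :: nat assume "k < 3"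
    then have "k = 0 \<or> k = 1 \<or> k = 2" by auto
    then show "comp (nu (x,y)) k = (1 - x) * (comp (nu (Tij (2,1) (x,y))) k + (if k = 2 then comp (nu (Tij (2,1) (x,y))) 1 else 0))"
      using dne unfolding T by (elim disjE; simp only: nu_div[OF dne]; simp add: distrib_left dm[OF dne] nu_xy; linarith?)
  qed
  ultimately show ?thesis using d by blast
qed

lemma case2:
  assumes "Inv (x,y)" and cnd: "2*x + y - 1 \<le> 0"
  shows "Inv (Tij (0,1) (x,y)) \<and> (\<exists>c>0. \<forall>k<3. comp (nu (x,y)) k = c * (comp (nu (Tij (0,1) (x,y))) k + (if k = 0 then comp (nu (Tij (0,1) (x,y))) 1 else 0)))"
proof -
  have I: "x > 0" "y > 0" "x + y < 1" "indep x y" using assms(1) by (auto simp: Inv_def)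
  have ne: "2*x + y - 1 \<noteq> 0"
  proof
    assume h: "2*x + y - 1 = 0"
    have "of_rat (-1) + of_rat (2) * x + of_rat (1) * y = (0::real)" using h by (simp add: algebra_simps)
    then show False using I(4)[unfolded indep_def, rule_format, of "-1" "2" "1"] by simp
  qed
  have T: "Tij (0,1) (x,y) = (x / (1 - x), y / (1 - x))" by (simp add: Tij_def)
  have d: "1 - x > 0" using I by linarith
  have dne: "1 - x \<noteq> 0" using d by linarith
  have ind: "indep (x / (1 - x)) (y / (1 - x))"
    apply (rule indep_trans[OF I(4), where d="1 - x" and fa="\<lambda>c0 c1 c2. c0" and fb="\<lambda>c0 c1 c2. c1 - c0" and fc="\<lambda>c0 c1 c2. c2"])
    using d apply simp
    using d apply (subst divlem, simp)
     apply (simp add: of_rat_add of_rat_diff of_rat_mult of_rat_minus algebra_simps)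
    apply (intro conjI; linarith)
    done
  have PQ: "x > 0" "y > 0" "x + y < 1 - x" using I d cnd ne by linarith+
  have pos: "x / (1 - x) > 0" "y / (1 - x) > 0" "x / (1 - x) + y / (1 - x) < 1"
    using PQ d by (simp_all add: add_divide_distrib[symmetric] pos_divide_less_eq)
  have "Inv (Tij (0,1) (x,y))" using pos ind T by (simp add: Inv_def)
  moreover have "\<forall>k<3. comp (nu (x,y)) k = (1 - x) * (comp (nu (Tij (0,1) (x,y))) k + (if k = 0 then comp (nu (Tij (0,1) (x,y))) 1 else 0))"
  proof (intro allI impI)
    fix k :: nat assume "k < 3"
    then have "k = 0 \<or> k = 1 \<or> k = 2" by auto
    then show "comp (nu (x,y)) k = (1 - x) * (comp (nu (Tij (0,1) (x,y))) k + (if k = 0 then comp (nu (Tij (0,1) (x,y))) 1 else 0))"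
      using dne unfolding T by (elim disjE; simp only: nu_div[OF dne]; simp add: distrib_left dm[OF dne] nu_xy; linarith?)
  qed
  ultimately show ?thesis using d by blast
qed

lemma case3:
  assumes "Inv (x,y)" and cnd: "\<not> 2*x + y - 1 \<le> 0"
  shows "Inv (Tij (1,0) (x,y)) \<and> (\<exists>c>0. \<forall>k<3. comp (nu (x,y)) k = c * (comp (nu (Tij (1,0) (x,y))) k + (if k = 1 then comp (nu (Tij (1,0) (x,y))) 0 else 0)))"
proof -
  have I: "x > 0" "y > 0" "x + y < 1" "indep x y" using assms(1) by (auto simp: Inv_def)
  have T: "Tij (1,0) (x,y) = ((2*x + y - 1) / (x + y), y / (x + y))" by (simp add: Tij_def)
  have d: "x + y > 0" using I by linarith
  have dne: "x + y \<noteq> 0" using d by linarith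
  have ind: "indep ((2*x + y - 1) / (x + y)) (y / (x + y))"
    apply (rule indep_trans[OF I(4), where d="x + y" and fa="\<lambda>c0 c1 c2. - c1" and fb="\<lambda>c0 c1 c2. c0 + 2*c1" and fc="\<lambda>c0 c1 c2. c0 + c1 + c2"])
    using d apply simp
    using d apply (subst divlem, simp)
     apply (simp add: of_rat_add of_rat_diff of_rat_mult of_rat_minus algebra_simps)
    apply (intro conjI; linarith)
    done
  have PQ: "(2*x + y - 1) > 0" "y > 0" "(2*x + y - 1) + y < x + y" using I d cnd  by linarith+
  have pos: "(2*x + y - 1) / (x + y) > 0" "y / (x + y) > 0" "(2*x + y - 1) / (x + y) + y / (x + y) < 1"
    using PQ d by (simp_all add: add_divide_distrib[symmetric] pos_divide_less_eq)
  have "Inv (Tij (1,0) (x,y))" using pos ind T by (simp add: Inv_def)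
  moreover have "\<forall>k<3. comp (nu (x,y)) k = (x + y) * (comp (nu (Tij (1,0) (x,y))) k + (if k = 1 then comp (nu (Tij (1,0) (x,y))) 0 else 0))"
  proof (intro allI impI)
    fix k :: nat assume "k < 3"
    then have "k = 0 \<or> k = 1 \<or> k = 2" by auto
    then show "comp (nu (x,y)) k = (x + y) * (comp (nu (Tij (1,0) (x,y))) k + (if k = 1 then comp (nu (Tij (1,0) (x,y))) 0 else 0))"
      using dne unfolding T by (elim disjE; simp only: nu_div[OF dne]; simp add: distrib_left dm[OF dne] nu_xy; linarith?)
  qed
  ultimately show ?thesis using d by blast
qed

lemma case4:
  assumes "Inv (x,y)" and cnd: "x + 2*y - 1 \<le> 0"
  shows "Inv (Tij (0,2) (x,y)) \<and> (\<exists>c>0. \<forall>k<3. comp (nu (x,y)) k = c * (comp (nu (Tij (0,2) (x,y))) k + (if k = 0 then comp (nu (Tij (0,2) (x,y))) 2 else 0)))"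
proof -
  have I: "x > 0" "y > 0" "x + y < 1" "indep x y" using assms(1) by (auto simp: Inv_def)
  have ne: "x + 2*y - 1 \<noteq> 0"
  proof
    assume h: "x + 2*y - 1 = 0"
    have "of_rat (-1) + of_rat (1) * x + of_rat (2) * y = (0::real)" using h by (simp add: algebra_simps)
    then show False using I(4)[unfolded indep_def, rule_format, of "-1" "1" "2"] by simp
  qed
  have T: "Tij (0,2) (x,y) = (x / (1 - y), y / (1 - y))" by (simp add: Tij_def)
  have d: "1 - y > 0" using I by linarith
  have dne: "1 - y \<noteq> 0" using d by linarith
  have ind: "indep (x / (1 - y)) (y / (1 - y))"
    apply (rule indep_trans[OF I(4), where d="1 - y" and fa="\<lambda>c0 c1 c2. c0" and fb="\<lambda>c0 c1 c2. c1" and fc="\<lambda>c0 c1 c2. c2 - c0"])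
    using d apply simp
    using d apply (subst divlem, simp)
     apply (simp add: of_rat_add of_rat_diff of_rat_mult of_rat_minus algebra_simps)
    apply (intro conjI; linarith)
    done
  have PQ: "x > 0" "y > 0" "x + y < 1 - y" using I d cnd ne by linarith+
  have pos: "x / (1 - y) > 0" "y / (1 - y) > 0" "x / (1 - y) + y / (1 - y) < 1"
    using PQ d by (simp_all add: add_divide_distrib[symmetric] pos_divide_less_eq)
  have "Inv (Tij (0,2) (x,y))" using pos ind T by (simp add: Inv_def)
  moreover have "\<forall>k<3. comp (nu (x,y)) k = (1 - y) * (comp (nu (Tij (0,2) (x,y))) k + (if k = 0 then comp (nu (Tij (0,2) (x,y))) 2 else 0))"
  proof (intro allI impI)
    fix k :: nat assume "k < 3"
    then have "k = 0 \<or> k = 1 \<or> k = 2" by auto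
    then show "comp (nu (x,y)) k = (1 - y) * (comp (nu (Tij (0,2) (x,y))) k + (if k = 0 then comp (nu (Tij (0,2) (x,y))) 2 else 0))"
      using dne unfolding T by (elim disjE; simp only: nu_div[OF dne]; simp add: distrib_left dm[OF dne] nu_xy; linarith?)
  qed
  ultimately show ?thesis using d by blast
qed

lemma case5:
  assumes "Inv (x,y)" and cnd: "\<not> x + 2*y - 1 \<le> 0"
  shows "Inv (Tij (2,0) (x,y)) \<and> (\<exists>c>0. \<forall>k<3. comp (nu (x,y)) k = c * (comp (nu (Tij (2,0) (x,y))) k + (if k = 2 then comp (nu (Tij (2,0) (x,y))) 0 else 0)))"
proof -
  have I: "x > 0" "y > 0" "x + y < 1" "indep x y" using assms(1) by (auto simp: Inv_def)
  have T: "Tij (2,0) (x,y) = (x / (x + y), (x + 2*y - 1) / (x + y))" by (simp add: Tij_def)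
  have d: "x + y > 0" using I by linarith
  have dne: "x + y \<noteq> 0" using d by linarith
  have ind: "indep (x / (x + y)) ((x + 2*y - 1) / (x + y))"
    apply (rule indep_trans[OF I(4), where d="x + y" and fa="\<lambda>c0 c1 c2. - c2" and fb="\<lambda>c0 c1 c2. c0 + c1 + c2" and fc="\<lambda>c0 c1 c2. c0 + 2*c2"])
    using d apply simp
    using d apply (subst divlem, simp)
     apply (simp add: of_rat_add of_rat_diff of_rat_mult of_rat_minus algebra_simps)
    apply (intro conjI; linarith)
    done
  have PQ: "x > 0" "(x + 2*y - 1) > 0" "x + (x + 2*y - 1) < x + y" using I d cnd  by linarith+
  have pos: "x / (x + y) > 0" "(x + 2*y - 1) / (x + y) > 0" "x / (x + y) + (x + 2*y - 1) / (x + y) < 1"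
    using PQ d by (simp_all add: add_divide_distrib[symmetric] pos_divide_less_eq)
  have "Inv (Tij (2,0) (x,y))" using pos ind T by (simp add: Inv_def)
  moreover have "\<forall>k<3. comp (nu (x,y)) k = (x + y) * (comp (nu (Tij (2,0) (x,y))) k + (if k = 2 then comp (nu (Tij (2,0) (x,y))) 0 else 0))"
  proof (intro allI impI)
    fix k :: nat assume "k < 3"
    then have "k = 0 \<or> k = 1 \<or> k = 2" by auto
    then show "comp (nu (x,y)) k = (x + y) * (comp (nu (Tij (2,0) (x,y))) k + (if k = 2 then comp (nu (Tij (2,0) (x,y))) 0 else 0))"
      using dne unfolding T by (elim disjE; simp only: nu_div[OF dne]; simp add: distrib_left dm[OF dne] nu_xy; linarith?)
  qed
  ultimately show ?thesis using d by blast
qed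

lemma eps_cases: "(eps K r (x,y) = (1,2) \<and> (x,y) \<in> tri (1,2)) \<or> (eps K r (x,y) = (2,1) \<and> (x,y) \<notin> tri (1,2))
  \<or> (eps K r (x,y) = (0,1) \<and> (x,y) \<in> tri (0,1)) \<or> (eps K r (x,y) = (1,0) \<and> (x,y) \<notin> tri (0,1))
  \<or> (eps K r (x,y) = (0,2) \<and> (x,y) \<in> tri (0,2)) \<or> (eps K r (x,y) = (2,0) \<and> (x,y) \<notin> tri (0,2))"
  unfolding eps_def Let_def by simp

lemma tri_Inv:
  assumes "Inv (x,y)"
  shows "(x,y) \<in> tri (1,2) \<longleftrightarrow> x \<ge> y" "(x,y) \<in> tri (0,1) \<longleftrightarrow> 2*x + y - 1 \<le> 0"
    "(x,y) \<in> tri (0,2) \<longleftrightarrow> x + 2*y - 1 \<le> 0"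
  using assms by (auto simp: tri_def Delta_def Inv_def)

lemma step:
  assumes "Inv p"
  shows "Inv (Tmap K r p) \<and> eps K r p \<in> Ind \<and> (\<exists>c>0. \<forall>k<3. comp (nu p) k = c * (comp (nu (Tmap K r p)) k + (if k = fst (eps K r p) then comp (nu (Tmap K r p)) (snd (eps K r p)) else 0)))"
proof -
  obtain x y where p: "p = (x,y)" by (cases p)
  have I: "Inv (x,y)" using assms p by simp
  from eps_cases[of K r x y] show ?thesis
  proof (elim disjE conjE)
    assume e: "eps K r (x,y) = (1,2)" and t: "(x,y) \<in> tri (1,2)"
    have T: "Tmap K r (x,y) = Tij (1,2) (x,y)" using e by (simp add: Tmap_def)
    have Ind: "(1,2) \<in> Ind" by (simp add: Ind_def)
    have cnd: "x \<ge> y" using t tri_Inv[OF I] by simp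
    show ?thesis unfolding p T e fst_conv snd_conv using case0[OF I cnd] Ind by blast
  next
    assume e: "eps K r (x,y) = (2,1)" and t: "(x,y) \<notin> tri (1,2)"
    have T: "Tmap K r (x,y) = Tij (2,1) (x,y)" using e by (simp add: Tmap_def)
    have Ind: "(2,1) \<in> Ind" by (simp add: Ind_def)
    have cnd: "\<not> x \<ge> y" using t tri_Inv[OF I] by simp
    show ?thesis unfolding p T e fst_conv snd_conv using case1[OF I cnd] Ind by blast
  next
    assume e: "eps K r (x,y) = (0,1)" and t: "(x,y) \<in> tri (0,1)"
    have T: "Tmap K r (x,y) = Tij (0,1) (x,y)" using e by (simp add: Tmap_def)
    have Ind: "(0,1) \<in> Ind" by (simp add: Ind_def)
    have cnd: "2*x + y - 1 \<le> 0" using t tri_Inv[OF I] by simp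
    show ?thesis unfolding p T e fst_conv snd_conv using case2[OF I cnd] Ind by blast
  next
    assume e: "eps K r (x,y) = (1,0)" and t: "(x,y) \<notin> tri (0,1)"
    have T: "Tmap K r (x,y) = Tij (1,0) (x,y)" using e by (simp add: Tmap_def)
    have Ind: "(1,0) \<in> Ind" by (simp add: Ind_def)
    have cnd: "\<not> 2*x + y - 1 \<le> 0" using t tri_Inv[OF I] by simp
    show ?thesis unfolding p T e fst_conv snd_conv using case3[OF I cnd] Ind by blast
  next
    assume e: "eps K r (x,y) = (0,2)" and t: "(x,y) \<in> tri (0,2)"
    have T: "Tmap K r (x,y) = Tij (0,2) (x,y)" using e by (simp add: Tmap_def)
    have Ind: "(0,2) \<in> Ind" by (simp add: Ind_def)
    have cnd: "x + 2*y - 1 \<le> 0" using t tri_Inv[OF I] by simp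
    show ?thesis unfolding p T e fst_conv snd_conv using case4[OF I cnd] Ind by blast
  next
    assume e: "eps K r (x,y) = (2,0)" and t: "(x,y) \<notin> tri (0,2)"
    have T: "Tmap K r (x,y) = Tij (2,0) (x,y)" using e by (simp add: Tmap_def)
    have Ind: "(2,0) \<in> Ind" by (simp add: Ind_def)
    have cnd: "\<not> x + 2*y - 1 \<le> 0" using t tri_Inv[OF I] by simp
    show ?thesis unfolding p T e fst_conv snd_conv using case5[OF I cnd] Ind by blast
  qed
qed

lemma Inv_iter: "Inv p \<Longrightarrow> Inv ((Tmap K r ^^ n) p)"
  by (induction n) (auto dest: step)

theorem theorem5p5:
  fixes K :: "real set" and p q :: nat and r \<alpha> \<beta> :: real and n :: nat
  assumes "is_real_cubic_field K"
    and "p > 0" and "q > 0" and "coprime p q" and "\<not> 3 dvd p"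
    and "r = real p / real q"
    and "(\<alpha>, \<beta>) \<in> DeltaK K"
  shows "let pn = (Tmap K r ^^ n) (\<alpha>, \<beta>);
             pn1 = (Tmap K r ^^ Suc n) (\<alpha>, \<beta>);
             en = eps K r pn
         in (\<forall>s \<in> stepped (nu pn1). set_mset (Theta en s) \<subseteq> stepped (nu pn))
          \<and> (\<forall>s \<in> stepped (nu pn1). \<forall>t \<in> stepped (nu pn1). s \<noteq> t \<longrightarrow>
                 set_mset (Theta en s) \<inter> set_mset (Theta en t) = {})
          \<and> (\<forall>z \<in> stepped (nu pn). \<exists>s \<in> stepped (nu pn1). z \<in># Theta en s)"
proof -
  have I0: "Inv (\<alpha>, \<beta>)" using assms(7) by (auto simp: DeltaK_def Inv_def indep_def)
  define pn where "pn = (Tmap K r ^^ n) (\<alpha>, \<beta>)"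
  have pn1: "(Tmap K r ^^ Suc n) (\<alpha>, \<beta>) = Tmap K r pn" by (simp add: pn_def)
  have In: "Inv pn" using Inv_iter[OF I0] pn_def by simp
  obtain i j where e: "eps K r pn = (i,j)" by (cases "eps K r pn")
  have S: "Inv (Tmap K r pn) \<and> (i,j) \<in> Ind \<and> (\<exists>c>0. \<forall>k<3. comp (nu pn) k = c * (comp (nu (Tmap K r pn)) k + (if k = i then comp (nu (Tmap K r pn)) j else 0)))"
    using step[of pn K r, OF In] unfolding e fst_conv snd_conv .
  from S obtain c where ij: "(i,j) \<in> Ind" and c: "c > 0"
    and h: "\<forall>k<3. comp (nu pn) k = c * (comp (nu (Tmap K r pn)) k + (if k = i then comp (nu (Tmap K r pn)) j else 0))"
    and In1: "Inv (Tmap K r pn)" by auto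
  have i3: "i < 3" "j < 3" using ij by (auto simp: Ind_def)
  have bi: "comp (nu (Tmap K r pn)) i \<ge> 0" "comp (nu (Tmap K r pn)) j \<ge> 0"
    using nu_pos[OF In1] i3 by (auto intro: less_imp_le)
  show ?thesis
    unfolding Let_def pn1 pn_def[symmetric] e
    using core[OF ij c bi h] by blast
qed

end
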